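(* Let $\mathfrak{X}=\mathbb{Z}\times\mathbb{Z}_{\geq 1}$ and consider, for each time $t\ge 0$, a random subset $X_t\subset\mathfrak{X}$ (a point process) with the following properties. (i) For each $n\ge1$ the number of points of $X_t$ on the level $\mathbb{Z}\times\{n\}$ is a deterministic finite number $m_n$, independent of $t$, with $m_n\le m_{n+1}\le m_n+1$; put $\delta_n=m_{n+1}-m_n\in\{0,1\}$. (ii) Almost surely $X_t$ is interlacing: writing $x_1^{(n)}>\dots>x_{m_n}^{(n)}$ for the first coordinates of the points on level $n$, one has $x_{k+1}^{(n+1)}<x_k^{(n)}\le x_k^{(n+1)}$ if $\delta_n=0$, and $x_{k+1}^{(n+1)}\le x_k^{(n)}< x_k^{(n+1)}$ if $\delta_n=1$, for all meaningful $k$. (iii) The process is determinantal with kernel $K(x,n,x',n',t)$: for distinct $(x_1,n_1),\dots,(x_k,n_k)\in\mathfrak{X}$, $\mathbb{P}(\text{there is a point of }X_t\text{ at each }(x_j,n_j))=\det[K(x_i,n_i,x_j,n_j,t)]_{i,j=1}^k$. Let $\tilde K(x,n,x',n',t)=\frac{\mathcal{C}(x,n)}{\mathcal{C}(x',n')}K(x,n,x',n',t)$ for some nowhere-vanishing function $\mathcal{C}$ on $\mathfrak{X}$, and suppose there is an integer $L$ such that for every $t\ge 0$: (C1) for all $(x,n),(x',n')\in\mathfrak{X}$ with $x,x'\ge L$: $\tilde K(x,n,x',n',t)+\tilde K(x,n,x'-1+\delta_{n'},n'+1,t)+\tilde K(x,n,x'+\delta_{n'},n'+1,t)$ equals $1$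 if $(x,n)=(x',n')$ and $0$ otherwise; (C2) for all $(x,n),(x',n')\in\mathfrak{X}$ with $n\ge2$ and $x,x'\ge L$: $\tilde K(x,n,x',n',t)+\tilde K(x+1-\delta_{n-1},n-1,x',n',t)+\tilde K(x-\delta_{n-1},n-1,x',n',t)$ equals $1$ if $(x,n)=(x',n')$ and $0$ otherwise; (C3) for all $n,n',n''$ and all $x',x''>L$: $\tilde K(x,n,x',n',t)\,\tilde K(x'',n'',x-1+\delta_n,n+1,t)\to0$ as $x\to\infty$; (C4) for all $n,n',n''$ and all $x',x''>L$: $\tilde K(x,n,x',n',t)\,\tilde K(x'',n'',x+\delta_n,n+1,t)\to0$ as $x\to\infty$; (C5) $\tilde K(x,n,x-1+\delta_n,n+1,t)\to 0$ as $x\to\infty$; (C6) $\tilde K(x,n,x+\delta_n,n+1,t)\to 1$ as $x\to\infty$. Then for every $t\ge0$ and every non-overlapping sequence $(x_1,n_1,x_1',n_1'),\dots,(x_k,n_k,x_k',n_k')$ of viable elements of $\mathfrak{X}\times\mathfrak{X}$ with $x_1,x_1',\dots,x_k,x_k'>L$, \[ \mathbb{P}\big(\text{the lozenge }(x_j,n_j,x_j',n_j')\text{ is present at time }t\text{ for each }j=1,\dots,k\big)=\det[\tilde K(x_i,n_i,x_j',n_j',t)]_{1\le i,j\le k}. \]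
   Context: Lozenges: an element $(x,n,x',n')\in\mathfrak{X}\times\mathfrak{X}$ is called viable if $(x',n')$ is one of $(x,n)$ (type I), $(x-1+\delta_n,n+1)$ (type II), or $(x+\delta_n,n+1)$ (type III); one thinks of $(x,n)$ as a black triangle and $(x',n')$ as a white triangle of a hexagonal lattice, the lozenge being their union. A sequence of viable elements $(x_j,n_j,x_j',n_j')$ is non-overlapping if the points $(x_j,n_j)$ are pairwise distinct and the points $(x_j',n_j')$ are pairwise distinct (a coincidence $(x_i,n_i)=(x_j',n_j')$ is allowed). An interlacing configuration $X$ determines the lozenge tiling as follows: for $(x,n)\in X$ the type I lozenge $(x,n,x,n)$ is present (type I lozenges are exactly the particles); for $(x,n)\notin X$, the type II lozenge $(x,n,x-1+\delta_n,n+1)$ is present if there is $k\in\{1,\dots,m_{n+1}\}$ with $x_k^{(n)}<x\le x_k^{(n+1)}-\delta_n$ (with the convention $x^{(n)}_{m_n+1}=-\infty$ when $\delta_n=1$), and otherwise the type III lozenge $(x,n,x+\delta_n,n+1)$ is present. A lozenge is "present at time $t$" if it belongs to the tiling determined by $X_t$. *)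

theory Defs
  imports "HOL-Probability.Probability" "Jordan_Normal_Form.Determinant"
begin

definition Xfrak :: "(int \<times> nat) set" where
  "Xfrak = {(x, n). n \<ge> 1}"

definition delta :: "(nat \<Rightarrow> nat) \<Rightarrow> nat \<Rightarrow> int" where
  "delta m n = int (m (Suc n)) - int (m n)"

definition level :: "(int \<times> nat) set \<Rightarrow> nat \<Rightarrow> int set" where
  "level S n = {x. (x, n) \<in> S}"

definition xk :: "(int \<times> nat) set \<Rightarrow> nat \<Rightarrow> nat \<Rightarrow> int" where
  "xk S n k = rev (sorted_list_of_set (level S n)) ! (k - 1)"

definition interlacing :: "(nat \<Rightarrow> nat) \<Rightarrow> (int \<times> nat) set \<Rightarrow> bool" where
  "interlacing m S \<longleftrightarrow>
     (\<forall>n\<ge>1. \<forall>k. 1 \<le> k \<and> k \<le> m n \<longrightarrow>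
        (if delta m n = 0 then
           (k \<le> m (Suc n) \<longrightarrow> xk S n k \<le> xk S (Suc n) k) \<and>
           (k + 1 \<le> m (Suc n) \<longrightarrow> xk S (Suc n) (k + 1) < xk S n k)
         else
           (k \<le> m (Suc n) \<longrightarrow> xk S n k < xk S (Suc n) k) \<and>
           (k + 1 \<le> m (Suc n) \<longrightarrow> xk S (Suc n) (k + 1) \<le> xk S n k)))"

definition viable :: "(nat \<Rightarrow> nat) \<Rightarrow> int \<times> nat \<times> int \<times> nat \<Rightarrow> bool" where
  "viable m l = (case l of (x, n, x', n') \<Rightarrow>
     n \<ge> 1 \<and> n' \<ge> 1 \<and>
     ((x', n') = (x, n) \<or> (x', n') = (x - 1 + delta m n, Suc n) \<or> (x', n') = (x + delta m n, Suc n)))"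

text \<open>Condition for the type II lozenge at (x,n) (when (x,n) is not a particle):
  exists k in {1..m_{n+1}} with x_k^{(n)} < x <= x_k^{(n+1)} - delta_n, where
  x^{(n)}_{m_n+1} = -infinity (only reachable when delta_n = 1).\<close>
definition typeII_cond :: "(nat \<Rightarrow> nat) \<Rightarrow> (int \<times> nat) set \<Rightarrow> int \<Rightarrow> nat \<Rightarrow> bool" where
  "typeII_cond m S x n \<longleftrightarrow>
     (\<exists>k. 1 \<le> k \<and> k \<le> m (Suc n) \<and> (k \<le> m n \<longrightarrow> xk S n k < x) \<and>
          x \<le> xk S (Suc n) k - delta m n)"

definition lozenge_present :: "(nat \<Rightarrow> nat) \<Rightarrow> (int \<times> nat) set \<Rightarrow> int \<times> nat \<times> int \<times> nat \<Rightarrow> bool" where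
  "lozenge_present m S l = (case l of (x, n, x', n') \<Rightarrow>
     (if (x', n') = (x, n) then (x, n) \<in> S
      else if (x', n') = (x - 1 + delta m n, Suc n) then (x, n) \<notin> S \<and> typeII_cond m S x n
      else if (x', n') = (x + delta m n, Suc n) then (x, n) \<notin> S \<and> \<not> typeII_cond m S x n
      else False))"

definition Ktilde :: "(int \<times> nat \<Rightarrow> real) \<Rightarrow> (int \<Rightarrow> nat \<Rightarrow> int \<Rightarrow> nat \<Rightarrow> real \<Rightarrow> real)
    \<Rightarrow> int \<Rightarrow> nat \<Rightarrow> int \<Rightarrow> nat \<Rightarrow> real \<Rightarrow> real" where
  "Ktilde C K x n x' n' t = C (x, n) / C (x', n') * K x n x' n' t"

end

theory Submission
  imports Defs
begin

lemma xk_le_iff: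
  fixes A :: "int set"
  assumes "finite A" "1 \<le> k" "k \<le> card A"
  shows "(x \<le> rev (sorted_list_of_set A) ! (k - 1)) \<longleftrightarrow> k \<le> card {y\<in>A. x \<le> y}"
proof -
  define l where "l = rev (sorted_list_of_set A)"
  have len: "length l = card A" unfolding l_def using assms by simp
  have dist: "distinct l" unfolding l_def by simp
  have setl: "set l = A" unfolding l_def using assms by simp
  have sw: "sorted_wrt (>) l" unfolding l_def
    by (simp add: sorted_wrt_rev)
  have mono: "\<And>i j. i < j \<Longrightarrow> j < length l \<Longrightarrow> l ! j < l ! i"
    using sw by (simp add: sorted_wrt_iff_nth_less)
  show ?thesis
  proof
    assume h: "x \<le> rev (sorted_list_of_set A) ! (k - 1)"
    hence h': "x \<le> l ! (k-1)" unfolding l_def .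
    have "(\<lambda>i. l ! i) ` {..<k} \<subseteq> {y\<in>A. x \<le> y}"
    proof
      fix y assume "y \<in> (\<lambda>i. l ! i) ` {..<k}"
      then obtain i where i: "i < k" "y = l ! i" by auto
      have "l ! (k-1) \<le> l ! i"
      proof (cases "i = k-1")
        case False
        then have "i < k-1" using i by auto
        moreover have "k-1 < length l" using assms len by linarith
        ultimately show ?thesis using mono[of i "k-1"] by (simp add: less_imp_le)
      qed simp
      moreover have "y \<in> A" using i assms len setl by (auto intro!: nth_mem)
      ultimately show "y \<in> {y\<in>A. x \<le> y}" using h' i by auto
    qed
    moreover have "card ((\<lambda>i. l ! i) ` {..<k}) = k"
      using assms len dist by (subst card_image) (auto simp: inj_on_def nth_eq_iff_index_eq)
    ultimately show "k \<le> card {y\<in>A. x \<le> y}"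
      using assms by (metis (no_types, lifting) card_mono finite_subset mem_Collect_eq subsetI)
  next
    assume h: "k \<le> card {y\<in>A. x \<le> y}"
    show "x \<le> rev (sorted_list_of_set A) ! (k - 1)"
    proof (rule ccontr)
      assume "\<not> ?thesis"
      hence h': "l ! (k-1) < x" unfolding l_def by simp
      have "{y\<in>A. x \<le> y} \<subseteq> (\<lambda>i. l ! i) ` {..<k-1}"
      proof
        fix y assume y: "y \<in> {y\<in>A. x \<le> y}"
        then obtain i where i: "i < length l" "y = l ! i" using setl by (auto simp: in_set_conv_nth)
        have "i < k - 1"
        proof (rule ccontr)
          assume "\<not> i < k - 1"
          hence "l ! i \<le> l ! (k-1)"
          proof (cases "i = k-1")
            case False
            then have "k-1 < i" using \<open>\<not> i < k - 1\<close> by auto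
            then show ?thesis using mono[of "k-1" i] i by auto
          qed simp
          thus False using h' y i by auto
        qed
        thus "y \<in> (\<lambda>i. l ! i) ` {..<k-1}" using i by auto
      qed
      hence "card {y\<in>A. x \<le> y} \<le> card ((\<lambda>i. l ! i) ` {..<k-1})" by (rule card_mono[rotated]) auto
      also have "\<dots> \<le> k - 1" using card_image_le[of "{..<k-1}" "\<lambda>i. l ! i"] by simp
      finally show False using h assms by simp
    qed
  qed
qed



definition Nc :: "(int \<times> nat) set \<Rightarrow> nat \<Rightarrow> int \<Rightarrow> nat" where
  "Nc S n x = card {y \<in> level S n. x \<le> y}"

definition goodS :: "(nat \<Rightarrow> nat) \<Rightarrow> (int \<times> nat) set \<Rightarrow> bool" where
  "goodS m S \<longleftrightarrow> (\<forall>n\<ge>1. finite (level S n) \<and> card (level S n) = m n) \<and> interlacing m S"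

lemma delta01:
  assumes "m n \<le> m (Suc n) \<and> m (Suc n) \<le> m n + 1"
  shows "delta m n = 0 \<or> delta m n = 1"
  using assms unfolding delta_def by auto

lemma Nc_le_card: "finite (level S n) \<Longrightarrow> Nc S n x \<le> card (level S n)"
  unfolding Nc_def by (rule card_mono) auto

lemma xk_le_Nc:
  assumes "finite (level S n)" "1 \<le> k" "k \<le> card (level S n)"
  shows "(x \<le> xk S n k) \<longleftrightarrow> k \<le> Nc S n x"
  unfolding xk_def Nc_def using xk_le_iff[OF assms] .

lemma typeII_iff:
  assumes f1: "finite (level S n)" and f2: "finite (level S (Suc n))"
    and c1: "card (level S n) = m n" and c2: "card (level S (Suc n)) = m (Suc n)"
  shows "typeII_cond m S x n \<longleftrightarrow> Nc S n x < Nc S (Suc n) (x + delta m n)"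
proof
  assume "typeII_cond m S x n"
  then obtain k where k: "1 \<le> k" "k \<le> m (Suc n)" "k \<le> m n \<longrightarrow> xk S n k < x"
      "x \<le> xk S (Suc n) k - delta m n" unfolding typeII_cond_def by blast
  have "k \<le> Nc S (Suc n) (x + delta m n)"
    using xk_le_Nc[OF f2 k(1), of "x + delta m n"] k c2 by auto
  moreover have "Nc S n x < k"
  proof (cases "k \<le> m n")
    case True
    then show ?thesis using xk_le_Nc[OF f1 k(1), of x] k c1 by auto
  next
    case False
    then show ?thesis using Nc_le_card[OF f1, of x] c1 by auto
  qed
  ultimately show "Nc S n x < Nc S (Suc n) (x + delta m n)" by simp
next
  assume h: "Nc S n x < Nc S (Suc n) (x + delta m n)"
  define k where "k = Nc S n x + 1"
  have k1: "1 \<le> k" "k \<le> Nc S (Suc n) (x + delta m n)" using h k_def by auto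
  have k2: "k \<le> m (Suc n)" using k1 Nc_le_card[OF f2, of "x + delta m n"] c2 by auto
  have "x + delta m n \<le> xk S (Suc n) k" using xk_le_Nc[OF f2 k1(1)] k1 k2 c2 by auto
  moreover have "k \<le> m n \<longrightarrow> xk S n k < x"
    using xk_le_Nc[OF f1 k1(1), of x] c1 k_def by auto
  ultimately show "typeII_cond m S x n" unfolding typeII_cond_def using k1 k2
    by (intro exI[of _ k]) auto
qed

lemma interl_N:
  assumes g: "goodS m S" and n: "n \<ge> 1" and mm: "m n \<le> m (Suc n) \<and> m (Suc n) \<le> m n + 1"
  shows "Nc S n x \<le> Nc S (Suc n) (x + delta m n) \<and> Nc S (Suc n) (x + delta m n) \<le> Nc S n (x+1) + 1"
proof -
  have f1: "finite (level S n)" and c1: "card (level S n) = m n"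
    and f2: "finite (level S (Suc n))" and c2: "card (level S (Suc n)) = m (Suc n)"
    using g n unfolding goodS_def by auto
  have il: "interlacing m S" using g unfolding goodS_def by auto
  have d: "delta m n = 0 \<or> delta m n = 1" using delta01[OF mm] .
  have dd: "int (m (Suc n)) = int (m n) + delta m n" unfolding delta_def by simp
  have I: "\<And>k. 1 \<le> k \<Longrightarrow> k \<le> m n \<Longrightarrow>
        (if delta m n = 0 then
           (k \<le> m (Suc n) \<longrightarrow> xk S n k \<le> xk S (Suc n) k) \<and>
           (k + 1 \<le> m (Suc n) \<longrightarrow> xk S (Suc n) (k + 1) < xk S n k)
         else
           (k \<le> m (Suc n) \<longrightarrow> xk S n k < xk S (Suc n) k) \<and>
           (k + 1 \<le> m (Suc n) \<longrightarrow> xk S (Suc n) (k + 1) \<le> xk S n k))"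
    using il n unfolding interlacing_def by blast
  have A: "Nc S n x \<le> Nc S (Suc n) (x + delta m n)"
  proof (cases "Nc S n x = 0")
    case False
    define k where "k = Nc S n x"
    have k: "1 \<le> k" "k \<le> m n" using False Nc_le_card[OF f1, of x] c1 k_def by auto
    have kx: "x \<le> xk S n k" using xk_le_Nc[OF f1 k(1), of x] k c1 k_def by auto
    have km: "k \<le> m (Suc n)" using k mm by auto
    have "x + delta m n \<le> xk S (Suc n) k" using I[OF k] km kx d by (auto split: if_splits)
    then have "k \<le> Nc S (Suc n) (x + delta m n)" using xk_le_Nc[OF f2 k(1)] km c2 by auto
    then show ?thesis using k_def by simp
  qed simp
  have B: "Nc S (Suc n) (x + delta m n) \<le> Nc S n (x+1) + 1"
  proof (cases "Nc S (Suc n) (x + delta m n) \<le> 1")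
    case False
    define k where "k = Nc S (Suc n) (x + delta m n) - 1"
    have k: "1 \<le> k" "k + 1 \<le> m (Suc n)"
      using False Nc_le_card[OF f2, of "x + delta m n"] c2 k_def by auto
    have kn: "k \<le> m n" using k mm by auto
    have kx: "x + delta m n \<le> xk S (Suc n) (k+1)"
      using xk_le_Nc[OF f2, of "k+1" "x + delta m n"] k c2 k_def False by auto
    have "x + 1 \<le> xk S n k" using I[OF k(1) kn] k kx d by (auto split: if_splits)
    then have "k \<le> Nc S n (x+1)" using xk_le_Nc[OF f1 k(1)] kn c1 by auto
    then show ?thesis using k_def by simp
  qed simp
  show ?thesis using A B by simp
qed

lemma Nc_step:
  assumes "finite (level S n)"
  shows "Nc S n y = Nc S n (y+1) + (if (y,n) \<in> S then 1 else 0)"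
proof -
  have e: "{z \<in> level S n. y \<le> z} = {z \<in> level S n. y+1 \<le> z} \<union> ({y} \<inter> level S n)" by auto
  have "card ({z \<in> level S n. y+1 \<le> z} \<union> ({y} \<inter> level S n)) =
        card {z \<in> level S n. y+1 \<le> z} + card ({y} \<inter> level S n)"
    using assms by (intro card_Un_disjoint) auto
  moreover have "card ({y} \<inter> level S n) = (if (y,n) \<in> S then 1 else 0)"
    by (auto simp: level_def)
  ultimately show ?thesis unfolding Nc_def using e by simp
qed

lemma W_comb:
  fixes y :: int
  assumes g: "goodS m S" and n: "n \<ge> 1" and mm: "m n \<le> m (Suc n) \<and> m (Suc n) \<le> m n + 1"
  defines "A1 \<equiv> (y + delta m n, Suc n) \<in> S"
    and "A2 \<equiv> (y+1, n) \<notin> S \<and> typeII_cond m S (y+1) n"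
    and "A3 \<equiv> (y, n) \<notin> S \<and> \<not> typeII_cond m S y n"
  shows "(A1 \<or> A2 \<or> A3) \<and> \<not> (A1 \<and> A2) \<and> \<not> (A1 \<and> A3) \<and> \<not> (A2 \<and> A3)"
proof -
  have f1: "finite (level S n)" and c1: "card (level S n) = m n"
    and f2: "finite (level S (Suc n))" and c2: "card (level S (Suc n)) = m (Suc n)"
    using g n unfolding goodS_def by auto
  let ?d = "delta m n"
  have t1: "typeII_cond m S y n \<longleftrightarrow> Nc S n y < Nc S (Suc n) (y + ?d)"
    using typeII_iff[OF f1 f2 c1 c2] .
  have t2: "typeII_cond m S (y+1) n \<longleftrightarrow> Nc S n (y+1) < Nc S (Suc n) (y + 1 + ?d)"
    using typeII_iff[OF f1 f2 c1 c2] .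
  have s1: "Nc S n y = Nc S n (y+1) + (if (y,n) \<in> S then 1 else 0)" using Nc_step[OF f1] .
  have s2: "Nc S n (y+1) = Nc S n (y+1+1) + (if (y+1,n) \<in> S then 1 else 0)" using Nc_step[OF f1] .
  have s3: "Nc S (Suc n) (y + ?d) = Nc S (Suc n) (y + 1 + ?d) + (if (y + ?d, Suc n) \<in> S then 1 else 0)"
    using Nc_step[OF f2, of "y + ?d"] by (simp add: add_ac)
  have i1: "Nc S n y \<le> Nc S (Suc n) (y + ?d) \<and> Nc S (Suc n) (y + ?d) \<le> Nc S n (y+1) + 1"
    using interl_N[OF g n mm] .
  have i2: "Nc S n (y+1) \<le> Nc S (Suc n) (y + 1 + ?d) \<and> Nc S (Suc n) (y + 1 + ?d) \<le> Nc S n (y+1+1) + 1"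
    using interl_N[OF g n mm] .
  show ?thesis unfolding A1_def A2_def A3_def t1 t2
    using s1 s2 s3 i1 i2 by (auto split: if_splits)
qed

lemma lp_I: "lozenge_present m S (x,n,x,n) \<longleftrightarrow> (x,n) \<in> S"
  unfolding lozenge_present_def by simp

lemma lp_II: "lozenge_present m S (x,n,x-1+delta m n,Suc n) \<longleftrightarrow> (x,n) \<notin> S \<and> typeII_cond m S x n"
  unfolding lozenge_present_def by simp

lemma lp_III: "lozenge_present m S (x,n,x+delta m n,Suc n) \<longleftrightarrow> (x,n) \<notin> S \<and> \<not> typeII_cond m S x n"
  unfolding lozenge_present_def by simp

lemma viable_cases:
  assumes "viable m (x,n,x',n')"
  shows "n \<ge> 1 \<and> n' \<ge> 1 \<and> ((x',n') = (x,n) \<or> (x',n') = (x-1+delta m n, Suc n) \<or> (x',n') = (x+delta m n, Suc n))"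
  using assms unfolding viable_def by simp

lemma black_excl:
  assumes "viable m (x,n,x1,n1)" "viable m (x,n,x2,n2)" "(x1,n1) \<noteq> (x2,n2)"
  shows "\<not> (lozenge_present m S (x,n,x1,n1) \<and> lozenge_present m S (x,n,x2,n2))"
  using assms unfolding viable_def lozenge_present_def by (auto split: if_splits)

lemma W_lp:
  fixes y :: int
  assumes g: "goodS m S" and n: "n \<ge> 1" and mm: "m n \<le> m (Suc n) \<and> m (Suc n) \<le> m n + 1"
  defines "A1 \<equiv> lozenge_present m S (y + delta m n, Suc n, y + delta m n, Suc n)"
    and "A2 \<equiv> lozenge_present m S (y+1, n, y + delta m n, Suc n)"
    and "A3 \<equiv> lozenge_present m S (y, n, y + delta m n, Suc n)"
  shows "(A1 \<or> A2 \<or> A3) \<and> \<not> (A1 \<and> A2) \<and> \<not> (A1 \<and> A3) \<and> \<not> (A2 \<and> A3)"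
proof -
  have a2: "A2 \<longleftrightarrow> (y+1, n) \<notin> S \<and> typeII_cond m S (y+1) n"
    unfolding A2_def using lp_II[of m S "y+1" n] by simp
  show ?thesis using W_comb[OF g n mm, of y] a2 unfolding A1_def A3_def lp_I lp_III by simp
qed

lemma eventually_III:
  assumes g: "goodS m S" and n: "n \<ge> 1" and mm: "m n \<le> m (Suc n) \<and> m (Suc n) \<le> m n + 1"
  shows "\<exists>B. \<forall>x\<ge>B. lozenge_present m S (x,n,x+delta m n,Suc n)"
proof -
  have f1: "finite (level S n)" and c1: "card (level S n) = m n"
    and f2: "finite (level S (Suc n))" and c2: "card (level S (Suc n)) = m (Suc n)"
    using g n unfolding goodS_def by auto
  have d: "delta m n \<ge> 0" using delta01[OF mm] by auto
  define B where "B = Max (insert 0 (level S n \<union> level S (Suc n))) + 1"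
  have bnd: "\<And>y. y \<in> level S n \<union> level S (Suc n) \<Longrightarrow> y < B"
    unfolding B_def using f1 f2 by (auto intro: Max_ge le_imp_less_Suc)
  have "\<forall>x\<ge>B. lozenge_present m S (x,n,x+delta m n,Suc n)"
  proof (intro allI impI)
    fix x assume x: "B \<le> x"
    have notin: "(x,n) \<notin> S" using bnd[of x] x by (auto simp: level_def)
    have "{y \<in> level S (Suc n). x + delta m n \<le> y} = {}" using bnd x d by fastforce
    then have "Nc S (Suc n) (x + delta m n) = 0" unfolding Nc_def by (metis card.empty)
    then have "\<not> typeII_cond m S x n" using typeII_iff[OF f1 f2 c1 c2] by simp
    then show "lozenge_present m S (x,n,x+delta m n,Suc n)" using notin lp_III by simp
  qed
  then show ?thesis by blast
qed

lemma white_types: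
  assumes "viable m (x,n,x',n')"
  shows "(x,n) = (x',n') \<or> (n' \<ge> 2 \<and> n = n'-1 \<and> (x = x' - delta m (n'-1) + 1 \<or> x = x' - delta m (n'-1)))"
  using viable_cases[OF assms] by auto

lemma white_excl:
  assumes g: "goodS m S" and mm: "\<And>n. n \<ge> 1 \<Longrightarrow> m n \<le> m (Suc n) \<and> m (Suc n) \<le> m n + 1"
    and v1: "viable m (x1,n1,x',n')" and v2: "viable m (x2,n2,x',n')" and ne: "(x1,n1) \<noteq> (x2,n2)"
  shows "\<not> (lozenge_present m S (x1,n1,x',n') \<and> lozenge_present m S (x2,n2,x',n'))"
proof (cases "n' \<ge> 2")
  case False
  then show ?thesis using white_types[OF v1] white_types[OF v2] ne by auto
next
  case True
  define k where "k = n' - 1"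
  have k: "k \<ge> 1" "n' = Suc k" using True k_def by auto
  define y where "y = x' - delta m k"
  have x': "x' = y + delta m k" using y_def by simp
  note W = W_lp[OF g k(1) mm[OF k(1)], of y]
  have t1: "(x1,n1) = (x',n') \<or> (x1,n1) = (y+1,k) \<or> (x1,n1) = (y,k)"
    using white_types[OF v1] k y_def by auto
  have t2: "(x2,n2) = (x',n') \<or> (x2,n2) = (y+1,k) \<or> (x2,n2) = (y,k)"
    using white_types[OF v2] k y_def by auto
  show ?thesis using t1 t2 ne W unfolding x' k(2) by auto
qed



locale loz =
  fixes M :: "'a measure" and X :: "'a \<Rightarrow> (int \<times> nat) set" and m :: "nat \<Rightarrow> nat"
    and K :: "int \<Rightarrow> nat \<Rightarrow> int \<Rightarrow> nat \<Rightarrow> real \<Rightarrow> real" and C :: "int \<times> nat \<Rightarrow> real"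
    and L :: int and t :: real
  assumes prob: "prob_space M"
    and meas: "\<And>p. {\<omega> \<in> space M. p \<in> X \<omega>} \<in> sets M"
    and m_mono: "\<And>n. n \<ge> 1 \<Longrightarrow> m n \<le> m (Suc n) \<and> m (Suc n) \<le> m n + 1"
    and counts: "AE \<omega> in M. \<forall>n\<ge>1. finite (level (X \<omega>) n) \<and> card (level (X \<omega>) n) = m n"
    and interl: "AE \<omega> in M. interlacing m (X \<omega>)"
    and determinantal: "\<And>ps. distinct ps \<Longrightarrow> set ps \<subseteq> Xfrak \<Longrightarrow>
        measure M {\<omega> \<in> space M. \<forall>p\<in>set ps. p \<in> X \<omega>} =
        det (mat (length ps) (length ps)
               (\<lambda>(i, j). K (fst (ps ! i)) (snd (ps ! i)) (fst (ps ! j)) (snd (ps ! j)) t))"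
    and C_nz: "\<And>p. p \<in> Xfrak \<Longrightarrow> C p \<noteq> 0"
    and C1: "\<And>x n x' n'. n \<ge> 1 \<Longrightarrow> n' \<ge> 1 \<Longrightarrow> x \<ge> L \<Longrightarrow> x' \<ge> L \<Longrightarrow>
        Ktilde C K x n x' n' t + Ktilde C K x n (x' - 1 + delta m n') (Suc n') t
          + Ktilde C K x n (x' + delta m n') (Suc n') t
        = (if (x, n) = (x', n') then 1 else 0)"
    and C2: "\<And>x n x' n'. n \<ge> 2 \<Longrightarrow> n' \<ge> 1 \<Longrightarrow> x \<ge> L \<Longrightarrow> x' \<ge> L \<Longrightarrow>
        Ktilde C K x n x' n' t + Ktilde C K (x + 1 - delta m (n - 1)) (n - 1) x' n' t
          + Ktilde C K (x - delta m (n - 1)) (n - 1) x' n' t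
        = (if (x, n) = (x', n') then 1 else 0)"
    and C4: "\<And>n n' n'' x' x''. n \<ge> 1 \<Longrightarrow> n' \<ge> 1 \<Longrightarrow> n'' \<ge> 1 \<Longrightarrow>
        x' > L \<Longrightarrow> x'' > L \<Longrightarrow>
        ((\<lambda>x. Ktilde C K x n x' n' t * Ktilde C K x'' n'' (x + delta m n) (Suc n) t)
           \<longlongrightarrow> 0) at_top"
    and C6: "\<And>n. n \<ge> 1 \<Longrightarrow>
        ((\<lambda>x. Ktilde C K x n (x + delta m n) (Suc n) t) \<longlongrightarrow> 1) at_top"
begin

interpretation P: prob_space M by (rule prob)

definition cf :: "int set \<Rightarrow> int set" where
  "cf A = (if finite A then A else UNIV)"

lemma lev_eq_meas: "{\<omega> \<in> space M. level (X \<omega>) n = A} \<in> sets M"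
proof -
  have "{\<omega> \<in> space M. level (X \<omega>) n = A} = {\<omega> \<in> space M. \<forall>y::int. ((y,n) \<in> X \<omega>) = (y \<in> A)}"
    by (auto simp: level_def)
  also have "\<dots> \<in> sets M"
  proof (rule sets.sets_Collect_countable_All)
    fix y :: int
    show "{\<omega> \<in> space M. ((y,n) \<in> X \<omega>) = (y \<in> A)} \<in> sets M"
    proof (cases "y \<in> A")
      case True
      then show ?thesis using meas[of "(y,n)"] by simp
    next
      case False
      then have "{\<omega> \<in> space M. ((y,n) \<in> X \<omega>) = (y \<in> A)} = space M - {\<omega> \<in> space M. (y,n) \<in> X \<omega>}"
        by auto
      then show ?thesis using meas[of "(y,n)"] by auto
    qed
  qed
  finally show ?thesis .
qed

lemma lev_fin_meas: "{\<omega> \<in> space M. finite (level (X \<omega>) n)} \<in> sets M"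
proof -
  have "{\<omega> \<in> space M. finite (level (X \<omega>) n)} = {\<omega> \<in> space M. \<exists>A\<in>Collect finite. level (X \<omega>) n = A}"
    by auto
  also have "\<dots> \<in> sets M"
    by (rule sets.sets_Collect_countable_Ex') (auto intro: lev_eq_meas countable_Collect_finite)
  finally show ?thesis .
qed

lemma cf_eq_meas: "{\<omega> \<in> space M. cf (level (X \<omega>) n) = A} \<in> sets M"
proof -
  have "{\<omega> \<in> space M. cf (level (X \<omega>) n) = A} =
     {\<omega> \<in> space M. finite (level (X \<omega>) n) \<and> level (X \<omega>) n = A} \<union>
     (if A = UNIV then space M - {\<omega> \<in> space M. finite (level (X \<omega>) n)} else {})"
    by (auto simp: cf_def)
  then show ?thesis using lev_fin_meas[of n] lev_eq_meas[of n A]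
    by (auto intro!: sets.sets_Collect_conj)
qed

lemma cf_pair_meas:
  "{\<omega> \<in> space M. Q (cf (level (X \<omega>) n1)) (cf (level (X \<omega>) n2))} \<in> sets M"
proof -
  define R where "R = insert (UNIV :: int set) (Collect finite)"
  have cR: "countable R" unfolding R_def by (auto intro: countable_Collect_finite)
  have inR: "\<And>A. cf A \<in> R" unfolding R_def cf_def by auto
  have "{\<omega> \<in> space M. Q (cf (level (X \<omega>) n1)) (cf (level (X \<omega>) n2))} =
        {\<omega> \<in> space M. \<exists>A\<in>R. \<exists>B\<in>R. cf (level (X \<omega>) n1) = A \<and> cf (level (X \<omega>) n2) = B \<and> Q A B}"
    using inR by blast
  also have "\<dots> \<in> sets M"
    by (intro sets.sets_Collect_countable_Ex' cR sets.sets_Collect_conj cf_eq_meas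
          sets.sets_Collect_const)
  finally show ?thesis .
qed

lemma sl_cf: "sorted_list_of_set (cf A) = sorted_list_of_set A"
  unfolding cf_def by auto

lemma typeII_meas: "{\<omega> \<in> space M. typeII_cond m (X \<omega>) x n} \<in> sets M"
proof -
  have tc: "typeII_cond m S x n = (\<exists>k. 1 \<le> k \<and> k \<le> m (Suc n) \<and>
          (k \<le> m n \<longrightarrow> rev (sorted_list_of_set (cf (level S n))) ! (k - 1) < x) \<and>
          x \<le> rev (sorted_list_of_set (cf (level S (Suc n)))) ! (k - 1) - delta m n)" for S
    unfolding typeII_cond_def xk_def sl_cf ..
  define Q where "Q = (\<lambda>A B. \<exists>k. 1 \<le> k \<and> k \<le> m (Suc n) \<and>
          (k \<le> m n \<longrightarrow> rev (sorted_list_of_set A) ! (k - 1) < x) \<and>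
          x \<le> rev (sorted_list_of_set B) ! (k - 1) - delta m n)"
  have "{\<omega> \<in> space M. typeII_cond m (X \<omega>) x n} =
    {\<omega> \<in> space M. Q (cf (level (X \<omega>) n)) (cf (level (X \<omega>) (Suc n)))}"
    using tc unfolding Q_def by simp
  then show ?thesis using cf_pair_meas[of Q n "Suc n"] by simp
qed

lemma lp_meas: "{\<omega> \<in> space M. lozenge_present m (X \<omega>) l} \<in> sets M"
proof -
  obtain x n x' n' where l: "l = (x,n,x',n')" by (cases l) auto
  show ?thesis unfolding l lozenge_present_def
    using meas[of "(x,n)"] typeII_meas[of x n]
    by (auto intro!: sets.sets_Collect_conj sets.sets_Collect_neg)
qed

definition Ev :: "(int \<times> nat \<times> int \<times> nat) list \<Rightarrow> 'a set" where
  "Ev ls = {\<omega> \<in> space M. \<forall>l\<in>set ls. lozenge_present m (X \<omega>) l}"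

lemma Ev_meas: "Ev ls \<in> sets M"
proof (cases "set ls = {}")
  case True
  then show ?thesis unfolding Ev_def by simp
next
  case False
  then show ?thesis unfolding Ev_def
    by (intro sets.sets_Collect_finite_All' lp_meas) auto
qed

end


context loz begin

interpretation P: prob_space M by (rule prob)

definition Pr :: "(int \<times> nat \<times> int \<times> nat) list \<Rightarrow> real" where
  "Pr ls = measure M (Ev ls)"

lemma good_AE: "AE \<omega> in M. goodS m (X \<omega>)"
  using counts interl by eventually_elim (auto simp: goodS_def)

lemma Ev_Cons: "Ev (l # r) = Ev r \<inter> {\<omega> \<in> space M. lozenge_present m (X \<omega>) l}"
  unfolding Ev_def by auto

lemma Ev_Cons_iff: "\<omega> \<in> Ev (l # r) \<longleftrightarrow> \<omega> \<in> Ev r \<and> lozenge_present m (X \<omega>) l"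
  unfolding Ev_def by auto

lemma Ev_sub: "Ev ls \<subseteq> space M" unfolding Ev_def by auto

lemma Ev_spaceD: "\<omega> \<in> Ev ls \<Longrightarrow> \<omega> \<in> space M" unfolding Ev_def by auto

lemma meas_ind: "A \<in> sets M \<Longrightarrow> measure M A = integral\<^sup>L M (indicator A :: 'a \<Rightarrow> real)"
  using sets.sets_into_space[of A M] by (simp add: Int_absorb2)

lemma meas3:
  assumes s: "A1 \<in> sets M" "A2 \<in> sets M" "A3 \<in> sets M" "B \<in> sets M"
    and ae: "AE \<omega> in M. (\<omega> \<in> B \<longleftrightarrow> \<omega> \<in> A1 \<or> \<omega> \<in> A2 \<or> \<omega> \<in> A3) \<and>
       \<not> (\<omega> \<in> A1 \<and> \<omega> \<in> A2) \<and> \<not> (\<omega> \<in> A1 \<and> \<omega> \<in> A3) \<and> \<not> (\<omega> \<in> A2 \<and> \<omega> \<in> A3)"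
  shows "measure M B = measure M A1 + measure M A2 + measure M A3"
proof -
  have i: "integrable M (indicator A :: 'a \<Rightarrow> real)" if "A \<in> sets M" for A
    using that P.emeasure_finite[of A] by (intro integrable_real_indicator) (simp_all add: less_top[symmetric])
  have "integral\<^sup>L M (indicator B :: 'a \<Rightarrow> real) =
        integral\<^sup>L M (\<lambda>\<omega>. indicator A1 \<omega> + indicator A2 \<omega> + (indicator A3 \<omega> :: real))"
  proof (rule integral_cong_AE)
    show "AE \<omega> in M. indicator B \<omega> = indicator A1 \<omega> + indicator A2 \<omega> + (indicator A3 \<omega> :: real)"
      using ae
    proof eventually_elim
      case (elim \<omega>)
      then show ?case unfolding indicator_def by (cases "\<omega> \<in> A1"; cases "\<omega> \<in> A2"; cases "\<omega> \<in> A3") simp_all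
    qed
    show "(indicator B :: 'a \<Rightarrow> real) \<in> borel_measurable M" using s(4) by (rule borel_measurable_indicator)
    show "(\<lambda>\<omega>. indicator A1 \<omega> + indicator A2 \<omega> + (indicator A3 \<omega> :: real)) \<in> borel_measurable M"
      using s by (intro borel_measurable_add borel_measurable_indicator)
  qed
  also have "\<dots> = integral\<^sup>L M (indicator A1 :: 'a \<Rightarrow> real) + integral\<^sup>L M (indicator A2 :: 'a \<Rightarrow> real)
        + integral\<^sup>L M (indicator A3 :: 'a \<Rightarrow> real)"
    using i s by simp
  finally show ?thesis using meas_ind[OF s(1)] meas_ind[OF s(2)] meas_ind[OF s(3)] meas_ind[OF s(4)] by linarith
qed

lemma P_B:
  "Pr ((x,n,x,n) # r) + Pr ((x,n,x-1+delta m n,Suc n) # r) + Pr ((x,n,x+delta m n,Suc n) # r) = Pr r"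
  unfolding Pr_def
  by (rule meas3[symmetric]; (rule Ev_meas)?) (rule AE_I2, unfold Ev_Cons_iff lp_I lp_II lp_III, blast)

lemma P_W:
  fixes y :: int
  assumes n: "n \<ge> 1"
  shows "Pr ((y + delta m n, Suc n, y + delta m n, Suc n) # r) + Pr ((y+1, n, y + delta m n, Suc n) # r)
       + Pr ((y, n, y + delta m n, Suc n) # r) = Pr r"
  unfolding Pr_def
proof (rule meas3[symmetric])
  show "AE \<omega> in M. (\<omega> \<in> Ev r \<longleftrightarrow> \<omega> \<in> Ev ((y + delta m n, Suc n, y + delta m n, Suc n) # r) \<or>
      \<omega> \<in> Ev ((y+1, n, y + delta m n, Suc n) # r) \<or> \<omega> \<in> Ev ((y, n, y + delta m n, Suc n) # r)) \<and>
     \<not> (\<omega> \<in> Ev ((y + delta m n, Suc n, y + delta m n, Suc n) # r) \<and> \<omega> \<in> Ev ((y+1, n, y + delta m n, Suc n) # r)) \<and>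
     \<not> (\<omega> \<in> Ev ((y + delta m n, Suc n, y + delta m n, Suc n) # r) \<and> \<omega> \<in> Ev ((y, n, y + delta m n, Suc n) # r)) \<and>
     \<not> (\<omega> \<in> Ev ((y+1, n, y + delta m n, Suc n) # r) \<and> \<omega> \<in> Ev ((y, n, y + delta m n, Suc n) # r))"
    using good_AE
  proof eventually_elim
    case (elim \<omega>)
    show ?case using W_lp[OF elim n m_mono[OF n], of y] unfolding Ev_Cons_iff by blast
  qed
qed (auto simp: Ev_meas)

lemma P_dup_black:
  assumes "l1 \<in> set ls" "l2 \<in> set ls" "viable m l1" "viable m l2" "l1 \<noteq> l2"
    "fst l1 = fst l2" "fst (snd l1) = fst (snd l2)"
  shows "Pr ls = 0"
proof -
  obtain x n x1 n1 where l1: "l1 = (x,n,x1,n1)" by (cases l1) auto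
  obtain x2 n2 where l2: "l2 = (x,n,x2,n2)" using assms(6,7) l1 by (cases l2) auto
  have "Ev ls = {}" using black_excl[of m x n x1 n1 x2 n2] assms l1 l2 unfolding Ev_def by auto
  then show ?thesis unfolding Pr_def by simp
qed

lemma P_dup_white:
  assumes "l1 \<in> set ls" "l2 \<in> set ls" "viable m l1" "viable m l2" "l1 \<noteq> l2"
    "snd (snd l1) = snd (snd l2)"
  shows "Pr ls = 0"
proof -
  obtain x1 n1 w where l1: "l1 = (x1,n1,w)" by (cases l1) auto
  obtain x2 n2 where l2: "l2 = (x2,n2,w)" using assms(6) l1 by (cases l2) auto
  obtain x' n' where w: "w = (x',n')" by (cases w) auto
  have "AE \<omega> in M. \<omega> \<in> Ev ls \<longleftrightarrow> \<omega> \<in> {}"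
    using good_AE
  proof eventually_elim
    case (elim \<omega>)
    show ?case using white_excl[OF elim m_mono, of x1 n1 x' n' x2 n2] assms l1 l2 w
      unfolding Ev_def by auto
  qed
  then have "measure M (Ev ls) = measure M {}" by (rule measure_eq_AE) (auto simp: Ev_meas)
  then show ?thesis unfolding Pr_def by simp
qed

lemma P_lim:
  assumes n: "n \<ge> 1"
  shows "(\<lambda>j::nat. Pr ((x0 + int j, n, x0 + int j + delta m n, Suc n) # r)) \<longlonglongrightarrow> Pr r"
proof -
  let ?s = "\<lambda>j::nat. indicator (Ev ((x0 + int j, n, x0 + int j + delta m n, Suc n) # r)) :: 'a \<Rightarrow> real"
  have "(\<lambda>j. integral\<^sup>L M (?s j)) \<longlonglongrightarrow> integral\<^sup>L M (indicator (Ev r))"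
  proof (rule integral_dominated_convergence[where w = "\<lambda>_. 1"])
    show "AE x in M. (\<lambda>i. ?s i x) \<longlonglongrightarrow> indicator (Ev r) x"
      using good_AE
    proof eventually_elim
      case (elim \<omega>)
      obtain B where B: "\<forall>x\<ge>B. lozenge_present m (X \<omega>) (x,n,x+delta m n,Suc n)"
        using eventually_III[OF elim n m_mono[OF n]] by blast
      have "eventually (\<lambda>j. indicator (Ev r) \<omega> = ?s j \<omega>) sequentially"
        unfolding eventually_sequentially
      proof (intro exI allI impI)
        fix j assume "nat (B - x0) \<le> j"
        then have "x0 + int j \<ge> B" by linarith
        then have "lozenge_present m (X \<omega>) (x0 + int j, n, x0 + int j + delta m n, Suc n)" using B by blast
        then show "indicator (Ev r) \<omega> = ?s j \<omega>" unfolding indicator_def Ev_Cons_iff by simp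
      qed
      then show ?case by (rule Lim_transform_eventually[OF tendsto_const])
    qed
  qed (auto intro: borel_measurable_indicator Ev_meas)
  then show ?thesis unfolding Pr_def using meas_ind[OF Ev_meas] by presburger
qed

end


definition blk :: "int \<times> nat \<times> int \<times> nat \<Rightarrow> int \<times> nat" where "blk l = (fst l, fst (snd l))"
definition wht :: "int \<times> nat \<times> int \<times> nat \<Rightarrow> int \<times> nat" where "wht l = snd (snd l)"

lemma blk_simp[simp]: "blk (x,n,x',n') = (x,n)" unfolding blk_def by simp
lemma wht_simp[simp]: "wht (x,n,x',n') = (x',n')" unfolding wht_def by simp

lemma det_sim:
  fixes a :: "nat \<Rightarrow> nat \<Rightarrow> real"
  assumes c: "\<And>i. i < k \<Longrightarrow> c i \<noteq> 0"
  shows "det (mat k k (\<lambda>(i,j). c i / c j * a i j)) = det (mat k k (\<lambda>(i,j). a i j))"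
proof -
  have "det (mat k k (\<lambda>(i,j). c i / c j * a i j)) =
    (\<Sum>p\<in>{p. p permutes {0..<k}}. signof p * (\<Prod>i=0..<k. c i / c (p i) * a i (p i)))"
    by (rule trans[OF det_def']) auto
  also have "\<dots> = (\<Sum>p\<in>{p. p permutes {0..<k}}. signof p * (\<Prod>i=0..<k. a i (p i)))"
  proof (rule sum.cong[OF refl])
    fix p assume "p \<in> {p. p permutes {0..<k}}"
    then have p: "p permutes {0..<k}" by simp
    have "(\<Prod>i=0..<k. c i / c (p i) * a i (p i)) = (\<Prod>i=0..<k. c i) / (\<Prod>i=0..<k. c (p i)) * (\<Prod>i=0..<k. a i (p i))"
      by (simp add: prod.distrib prod_dividef)
    also have "(\<Prod>i=0..<k. c (p i)) = (\<Prod>i=0..<k. c i)"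
      using prod.permute[OF p, of c] by (simp add: comp_def)
    also have "(\<Prod>i=0..<k. c i) \<noteq> 0" using c by (simp add: prod_zero_iff)
    then have "(\<Prod>i=0..<k. c i) / (\<Prod>i=0..<k. c i) = 1" by simp
    finally show "signof p * (\<Prod>i=0..<k. c i / c (p i) * a i (p i)) = signof p * (\<Prod>i=0..<k. a i (p i))"
      by simp
  qed
  also have "\<dots> = det (mat k k (\<lambda>(i,j). a i j))"
    by (rule trans[OF _ det_def'[symmetric]]) auto
  finally show ?thesis .
qed

lemma det_perm_both:
  fixes A :: "real mat"
  assumes A: "A \<in> carrier_mat n n" and p: "p permutes {..<n}"
  shows "det (mat n n (\<lambda>(i,j). A $$ (p i, p j))) = det A"
proof -
  have p': "p permutes {0..<n}" using p by (simp add: lessThan_atLeast0)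
  define B where "B = mat n n (\<lambda>(i,j). A $$ (i, p j))"
  have B: "B \<in> carrier_mat n n" unfolding B_def by simp
  have "mat n n (\<lambda>(i,j). A $$ (p i, p j)) = mat n n (\<lambda>(i,j). B $$ (p i, j))"
    unfolding B_def using permutes_in_image[OF p] by (intro eq_matI) auto
  then have 1: "det (mat n n (\<lambda>(i,j). A $$ (p i, p j))) = signof p * det B"
    using det_permute_rows[OF B p'] by simp
  have "B\<^sup>T = mat n n (\<lambda>(i,j). A\<^sup>T $$ (p i, j))"
    unfolding B_def using permutes_in_image[OF p] A by (intro eq_matI) auto
  then have "det B = signof p * det A\<^sup>T"
    using det_transpose[OF B] det_permute_rows[of "A\<^sup>T" n p] p' A by auto
  also have "det A\<^sup>T = det A" using det_transpose[OF A] .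
  finally have "det B = signof p * det A" .
  with 1 have "det (mat n n (\<lambda>(i,j). A $$ (p i, p j))) = (signof p * signof p) * det A" by simp
  also have "signof p * signof p = (1::real)" by (simp add: sign_def)
  finally show ?thesis by simp
qed

context loz begin

definition kt :: "int \<times> nat \<Rightarrow> int \<times> nat \<Rightarrow> real" where
  "kt b w = Ktilde C K (fst b) (snd b) (fst w) (snd w) t"

definition Mx :: "(int \<times> nat \<times> int \<times> nat) list \<Rightarrow> real mat" where
  "Mx ls = mat (length ls) (length ls)
       (\<lambda>(i, j). case ls ! i of (x, n, _, _) \<Rightarrow> case ls ! j of (_, _, x', n') \<Rightarrow>
           Ktilde C K x n x' n' t)"

definition Dt :: "(int \<times> nat \<times> int \<times> nat) list \<Rightarrow> real" where
  "Dt ls = det (Mx ls)"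

lemma Mx_carrier: "Mx ls \<in> carrier_mat (length ls) (length ls)" unfolding Mx_def by simp

lemma Mx_dim[simp]: "dim_row (Mx ls) = length ls" "dim_col (Mx ls) = length ls"
  unfolding Mx_def by simp_all

lemma Mx_idx: "i < length ls \<Longrightarrow> j < length ls \<Longrightarrow> Mx ls $$ (i,j) = kt (blk (ls!i)) (wht (ls!j))"
  unfolding Mx_def kt_def blk_def wht_def by (simp split: prod.splits)

lemma Dt_perm:
  assumes p: "p permutes {..<length ls}"
  shows "Dt (permute_list p ls) = Dt ls"
proof -
  have "Mx (permute_list p ls) = mat (length ls) (length ls) (\<lambda>(i,j). Mx ls $$ (p i, p j))"
    using permutes_in_image[OF p] p
    by (intro eq_matI) (auto simp: Mx_idx permute_list_nth)
  then show ?thesis unfolding Dt_def using det_perm_both[OF Mx_carrier p] by simp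
qed

lemma Dt_dup_row:
  assumes "i < length ls" "j < length ls" "i \<noteq> j" "blk (ls!i) = blk (ls!j)"
  shows "Dt ls = 0"
  unfolding Dt_def
  by (rule det_identical_rows[OF Mx_carrier assms(3,1,2)]) (intro eq_vecI, auto simp: Mx_idx assms)

lemma Dt_dup_col:
  assumes "i < length ls" "j < length ls" "i \<noteq> j" "wht (ls!i) = wht (ls!j)"
  shows "Dt ls = 0"
  unfolding Dt_def
  by (rule det_identical_columns[OF Mx_carrier assms(3,1,2)]) (intro eq_vecI, auto simp: Mx_idx assms)

lemma Mx_del00: "mat_delete (Mx (l # r)) 0 0 = Mx r"
  by (intro eq_matI) (auto simp: mat_delete_def Mx_idx)

end


context loz begin

lemma delta_nonneg: "n \<ge> 1 \<Longrightarrow> delta m n \<ge> 0"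
  using delta01[of m n] m_mono[of n] by force

lemma blk_cons_eq: "blk v = blk v' \<Longrightarrow> blk ((v#r)!k) = blk ((v'#r)!k)"
  by (cases k) auto

lemma wht_cons_eq: "wht v = wht v' \<Longrightarrow> wht ((v#r)!k) = wht ((v'#r)!k)"
  by (cases k) auto

lemma cof_col0_eq:
  assumes "blk v = blk v'"
  shows "cofactor (Mx (v#r)) i 0 = cofactor (Mx (v'#r)) i 0"
proof -
  have "mat_delete (Mx (v#r)) i 0 = mat_delete (Mx (v'#r)) i 0"
    by (intro eq_matI) (auto simp: mat_delete_def Mx_idx blk_cons_eq[OF assms])
  then show ?thesis unfolding cofactor_def by simp
qed

lemma cof_row0_eq:
  assumes "wht v = wht v'"
  shows "cofactor (Mx (v#r)) 0 j = cofactor (Mx (v'#r)) 0 j"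
proof -
  have "mat_delete (Mx (v#r)) 0 j = mat_delete (Mx (v'#r)) 0 j"
    by (intro eq_matI) (auto simp: mat_delete_def Mx_idx wht_cons_eq[OF assms])
  then show ?thesis unfolding cofactor_def by simp
qed

lemma Dt_col0: "Dt (v#r) = (\<Sum>i<Suc (length r). Mx (v#r) $$ (i,0) * cofactor (Mx (v#r)) i 0)"
  unfolding Dt_def using laplace_expansion_column[OF Mx_carrier, of 0 "v#r"] by simp

lemma Dt_row0: "Dt (v#r) = (\<Sum>j<Suc (length r). Mx (v#r) $$ (0,j) * cofactor (Mx (v#r)) 0 j)"
  unfolding Dt_def using laplace_expansion_row[OF Mx_carrier, of 0 "v#r"] by simp

lemma cof00: "cofactor (Mx (v#r)) 0 0 = Dt r"
  unfolding cofactor_def Dt_def Mx_del00 by simp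

lemma Dt_B:
  assumes n: "n \<ge> 1" and x: "x \<ge> L" and nb: "(x,n) \<notin> blk ` set r"
    and rb: "\<forall>l\<in>set r. fst (blk l) \<ge> L \<and> snd (blk l) \<ge> 1"
  shows "Dt ((x,n,x,n)#r) + Dt ((x,n,x-1+delta m n,Suc n)#r) + Dt ((x,n,x+delta m n,Suc n)#r) = Dt r"
proof -
  let ?N = "Suc (length r)"
  let ?v1 = "(x,n,x,n)" and ?v2 = "(x,n,x-1+delta m n,Suc n)" and ?v3 = "(x,n,x+delta m n,Suc n)"
  define c where "c i = cofactor (Mx (?v1#r)) i 0" for i
  have c2: "cofactor (Mx (?v2#r)) i 0 = c i" for i unfolding c_def by (rule cof_col0_eq) simp
  have c3: "cofactor (Mx (?v3#r)) i 0 = c i" for i unfolding c_def by (rule cof_col0_eq) simp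
  have colsum: "Mx (?v1#r) $$ (i,0) + Mx (?v2#r) $$ (i,0) + Mx (?v3#r) $$ (i,0) = (if i = 0 then 1 else 0)"
    if i: "i < ?N" for i
  proof -
    define b where "b = blk ((?v1#r)!i)"
    have b2: "blk ((?v2#r)!i) = b" and b3: "blk ((?v3#r)!i) = b" unfolding b_def
      by (cases i; simp)+
    have bL: "fst b \<ge> L \<and> snd b \<ge> 1"
      using rb x n i unfolding b_def by (cases i) auto
    have beq: "b = (x,n) \<longleftrightarrow> i = 0"
    proof (cases i)
      case (Suc k)
      then have "b \<in> blk ` set r" unfolding b_def using i by auto
      then have "b \<noteq> (x,n)" using nb by metis
      then show ?thesis using Suc by simp
    qed (simp add: b_def)
    have "Mx (?v1#r) $$ (i,0) + Mx (?v2#r) $$ (i,0) + Mx (?v3#r) $$ (i,0) =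
       Ktilde C K (fst b) (snd b) x n t + Ktilde C K (fst b) (snd b) (x - 1 + delta m n) (Suc n) t
          + Ktilde C K (fst b) (snd b) (x + delta m n) (Suc n) t"
      using i by (simp add: Mx_idx b_def[symmetric] b2 b3 kt_def)
    also have "\<dots> = (if (fst b, snd b) = (x, n) then 1 else 0)"
      by (rule C1) (use bL n x in auto)
    finally show ?thesis using beq by simp
  qed
  have "Dt (?v1#r) + Dt (?v2#r) + Dt (?v3#r) =
    (\<Sum>i<?N. (Mx (?v1#r) $$ (i,0) + Mx (?v2#r) $$ (i,0) + Mx (?v3#r) $$ (i,0)) * c i)"
    unfolding Dt_col0 c2 c3 c_def[symmetric] by (simp add: sum.distrib algebra_simps)
  also have "\<dots> = (\<Sum>i<?N. (if i = 0 then c i else 0))"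
    by (rule sum.cong[OF refl]) (simp add: colsum)
  also have "\<dots> = c 0" by simp
  also have "\<dots> = Dt r" unfolding c_def by (rule cof00)
  finally show ?thesis .
qed

lemma Dt_W:
  fixes y :: int
  assumes n: "n \<ge> 1" and y: "y \<ge> L" and nw: "(y + delta m n, Suc n) \<notin> wht ` set r"
    and rw: "\<forall>l\<in>set r. fst (wht l) \<ge> L \<and> snd (wht l) \<ge> 1"
  shows "Dt ((y + delta m n, Suc n, y + delta m n, Suc n)#r) + Dt ((y+1, n, y + delta m n, Suc n)#r)
       + Dt ((y, n, y + delta m n, Suc n)#r) = Dt r"
proof -
  let ?N = "Suc (length r)"
  let ?v1 = "(y + delta m n, Suc n, y + delta m n, Suc n)" and ?v2 = "(y+1, n, y + delta m n, Suc n)"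
    and ?v3 = "(y, n, y + delta m n, Suc n)"
  define c where "c j = cofactor (Mx (?v1#r)) 0 j" for j
  have c2: "cofactor (Mx (?v2#r)) 0 j = c j" for j unfolding c_def by (rule cof_row0_eq) simp
  have c3: "cofactor (Mx (?v3#r)) 0 j = c j" for j unfolding c_def by (rule cof_row0_eq) simp
  have d0: "delta m n \<ge> 0" using delta_nonneg[OF n] .
  have rowsum: "Mx (?v1#r) $$ (0,j) + Mx (?v2#r) $$ (0,j) + Mx (?v3#r) $$ (0,j) = (if j = 0 then 1 else 0)"
    if j: "j < ?N" for j
  proof -
    define w where "w = wht ((?v1#r)!j)"
    have w2: "wht ((?v2#r)!j) = w" and w3: "wht ((?v3#r)!j) = w" unfolding w_def
      by (cases j; simp)+
    have wL: "fst w \<ge> L \<and> snd w \<ge> 1"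
      using rw y d0 j unfolding w_def by (cases j) auto
    have weq: "w = (y + delta m n, Suc n) \<longleftrightarrow> j = 0"
    proof (cases j)
      case (Suc k)
      then have "w \<in> wht ` set r" unfolding w_def using j by auto
      then have "w \<noteq> (y + delta m n, Suc n)" using nw by metis
      then show ?thesis using Suc by simp
    qed (simp add: w_def)
    have "Mx (?v1#r) $$ (0,j) + Mx (?v2#r) $$ (0,j) + Mx (?v3#r) $$ (0,j) =
       Ktilde C K (y + delta m n) (Suc n) (fst w) (snd w) t
         + Ktilde C K (y + delta m n + 1 - delta m (Suc n - 1)) (Suc n - 1) (fst w) (snd w) t
         + Ktilde C K (y + delta m n - delta m (Suc n - 1)) (Suc n - 1) (fst w) (snd w) t"
      using j by (simp add: Mx_idx w_def[symmetric] w2 w3 kt_def)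
    also have "\<dots> = (if (y + delta m n, Suc n) = (fst w, snd w) then 1 else 0)"
      by (rule C2) (use wL n y d0 in auto)
    finally show ?thesis using weq by (auto split: if_splits)
  qed
  have "Dt (?v1#r) + Dt (?v2#r) + Dt (?v3#r) =
    (\<Sum>j<?N. (Mx (?v1#r) $$ (0,j) + Mx (?v2#r) $$ (0,j) + Mx (?v3#r) $$ (0,j)) * c j)"
    unfolding Dt_row0 c2 c3 c_def[symmetric] by (simp add: sum.distrib algebra_simps)
  also have "\<dots> = (\<Sum>j<?N. (if j = 0 then c j else 0))"
    by (rule sum.cong[OF refl]) (simp add: rowsum)
  also have "\<dots> = c 0" by simp
  also have "\<dots> = Dt r" unfolding c_def by (rule cof00)
  finally show ?thesis .
qed

end


lemma filterlim_shift_int: "filterlim (\<lambda>j::nat. x0 + int j) at_top sequentially"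
  unfolding filterlim_at_top eventually_sequentially
proof (intro allI)
  fix Z :: int show "\<exists>N. \<forall>n\<ge>N. Z \<le> x0 + int n" by (rule exI[of _ "nat (Z - x0)"]) auto
qed

context loz begin

lemma del_del_eq:
  assumes "i < length r" "j < length r"
  shows "mat_delete (mat_delete (Mx (v # r)) 0 (Suc j)) i 0 = mat_delete (mat_delete (Mx (v' # r)) 0 (Suc j)) i 0"
  by (intro eq_matI) (auto simp: mat_delete_def Mx_idx)

lemma Dt_expand:
  fixes x :: int and n :: nat and r :: "(int \<times> nat \<times> int \<times> nat) list"
  defines "v \<equiv> (x, n, x + delta m n, Suc n)"
  defines "cc \<equiv> \<lambda>i j. cofactor (mat_delete (Mx ((0, n, delta m n, Suc n) # r)) 0 (Suc j)) i 0"
  shows "Dt (v # r) = Ktilde C K x n (x + delta m n) (Suc n) t * Dt r +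
     (\<Sum>j<length r. (-1)^(Suc j) * (\<Sum>i<length r.
        (Ktilde C K x n (fst (wht (r!j))) (snd (wht (r!j))) t *
         Ktilde C K (fst (blk (r!i))) (snd (blk (r!i))) (x + delta m n) (Suc n) t) * cc i j))"
proof -
  let ?A = "Mx (v # r)"
  have "Dt (v # r) = (\<Sum>j<Suc (length r). ?A $$ (0,j) * cofactor ?A 0 j)" by (rule Dt_row0)
  also have "\<dots> = ?A $$ (0,0) * cofactor ?A 0 0 + (\<Sum>j<length r. ?A $$ (0,Suc j) * cofactor ?A 0 (Suc j))"
    by (rule sum.lessThan_Suc_shift)
  also have "?A $$ (0,0) * cofactor ?A 0 0 = Ktilde C K x n (x + delta m n) (Suc n) t * Dt r"
    by (simp add: cof00 Mx_idx kt_def v_def)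
  also have "(\<Sum>j<length r. ?A $$ (0,Suc j) * cofactor ?A 0 (Suc j)) =
     (\<Sum>j<length r. (-1)^(Suc j) * (\<Sum>i<length r.
        (Ktilde C K x n (fst (wht (r!j))) (snd (wht (r!j))) t *
         Ktilde C K (fst (blk (r!i))) (snd (blk (r!i))) (x + delta m n) (Suc n) t) * cc i j))"
  proof (rule sum.cong[OF refl])
    fix j assume j: "j \<in> {..<length r}"
    let ?B = "mat_delete ?A 0 (Suc j)"
    have Bc: "?B \<in> carrier_mat (length r) (length r)"
      using mat_delete_carrier[OF Mx_carrier[of "v#r"]] by simp
    have lr: "0 < length r" using j by auto
    have "det ?B = (\<Sum>i<length r. ?B $$ (i,0) * cofactor ?B i 0)"
      by (rule laplace_expansion_column[OF Bc lr])
    also have "\<dots> = (\<Sum>i<length r. Ktilde C K (fst (blk (r!i))) (snd (blk (r!i))) (x + delta m n) (Suc n) t * cc i j)"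
    proof (rule sum.cong[OF refl])
      fix i assume i: "i \<in> {..<length r}"
      have "cofactor ?B i 0 = cc i j" unfolding cc_def cofactor_def
        using del_del_eq[of i r j v "(0, n, delta m n, Suc n)"] i j by simp
      moreover have "?B $$ (i,0) = Ktilde C K (fst (blk (r!i))) (snd (blk (r!i))) (x + delta m n) (Suc n) t"
        using i j lr by (simp add: mat_delete_def Mx_idx kt_def v_def)
      ultimately show "?B $$ (i,0) * cofactor ?B i 0 = Ktilde C K (fst (blk (r!i))) (snd (blk (r!i))) (x + delta m n) (Suc n) t * cc i j"
        by simp
    qed
    finally have dB: "det ?B = \<dots>" .
    have a0: "?A $$ (0, Suc j) = Ktilde C K x n (fst (wht (r!j))) (snd (wht (r!j))) t"
      using j by (simp add: Mx_idx kt_def v_def)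
    show "?A $$ (0,Suc j) * cofactor ?A 0 (Suc j) = (-1)^(Suc j) * (\<Sum>i<length r.
        (Ktilde C K x n (fst (wht (r!j))) (snd (wht (r!j))) t *
         Ktilde C K (fst (blk (r!i))) (snd (blk (r!i))) (x + delta m n) (Suc n) t) * cc i j)"
      unfolding cofactor_def[of ?A 0 "Suc j"] dB a0
      by (simp add: sum_distrib_left algebra_simps)
  qed
  finally show ?thesis .
qed

lemma Dt_lim:
  assumes n: "n \<ge> 1" and rb: "\<forall>l\<in>set r. fst (blk l) > L \<and> snd (blk l) \<ge> 1"
    and rw: "\<forall>l\<in>set r. fst (wht l) > L \<and> snd (wht l) \<ge> 1"
  shows "(\<lambda>j::nat. Dt ((x0 + int j, n, x0 + int j + delta m n, Suc n) # r)) \<longlonglongrightarrow> Dt r"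
proof -
  define cc where "cc = (\<lambda>i j. cofactor (mat_delete (Mx ((0, n, delta m n, Suc n) # r)) 0 (Suc j)) i 0)"
  let ?s = "\<lambda>j::nat. x0 + int j"
  have c6: "(\<lambda>k. Ktilde C K (?s k) n (?s k + delta m n) (Suc n) t) \<longlonglongrightarrow> 1"
    using filterlim_compose[OF C6[OF n] filterlim_shift_int] .
  have c4: "(\<lambda>k. Ktilde C K (?s k) n (fst (wht (r!j))) (snd (wht (r!j))) t *
         Ktilde C K (fst (blk (r!i))) (snd (blk (r!i))) (?s k + delta m n) (Suc n) t) \<longlonglongrightarrow> 0"
    if "i < length r" "j < length r" for i j
  proof -
    have "r!i \<in> set r" "r!j \<in> set r" using that by auto
    then have h: "fst (wht (r!j)) > L" "snd (wht (r!j)) \<ge> 1" "fst (blk (r!i)) > L" "snd (blk (r!i)) \<ge> 1"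
      using rb rw by auto
    show ?thesis using filterlim_compose[OF C4[OF n h(2) h(4) h(1) h(3)] filterlim_shift_int] .
  qed
  have "(\<lambda>k. Ktilde C K (?s k) n (?s k + delta m n) (Suc n) t * Dt r +
     (\<Sum>j<length r. (-1)^(Suc j) * (\<Sum>i<length r.
        (Ktilde C K (?s k) n (fst (wht (r!j))) (snd (wht (r!j))) t *
         Ktilde C K (fst (blk (r!i))) (snd (blk (r!i))) (?s k + delta m n) (Suc n) t) * cc i j)))
     \<longlonglongrightarrow> 1 * Dt r + (\<Sum>j<length r. (-1)^(Suc j) * (\<Sum>i<length r. 0 * cc i j))"
    by (intro tendsto_add tendsto_mult c6 tendsto_const tendsto_sum c4) auto
  then show ?thesis unfolding cc_def Dt_expand[symmetric] by simp
qed

end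


context loz begin

definition Sdom :: "(int \<times> nat \<times> int \<times> nat) list \<Rightarrow> bool" where
  "Sdom ls \<longleftrightarrow> distinct ls \<and> (\<forall>l\<in>set ls. viable m l \<and> fst (blk l) > L \<and> fst (wht l) > L)"

definition nI :: "(int \<times> nat \<times> int \<times> nat) list \<Rightarrow> nat" where
  "nI ls = length (filter (\<lambda>l. wht l \<noteq> blk l) ls)"

definition Fd :: "(int \<times> nat \<times> int \<times> nat) list \<Rightarrow> real" where
  "Fd ls = Pr ls - Dt ls"

lemma viable_lev: "viable m l \<Longrightarrow> snd (blk l) \<ge> 1 \<and> snd (wht l) \<ge> 1"
  unfolding viable_def blk_def wht_def by (auto split: prod.splits)

lemma Fd_dup_black:
  assumes "l1 \<in> set ls" "l2 \<in> set ls" "viable m l1" "viable m l2" "l1 \<noteq> l2" "blk l1 = blk l2"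
  shows "Fd ls = 0"
proof -
  have "Pr ls = 0" using P_dup_black[OF assms(1-5)] assms(6) unfolding blk_def by simp
  moreover obtain i j where ij: "i < length ls" "j < length ls" "ls!i = l1" "ls!j = l2"
    using assms(1,2) by (metis in_set_conv_nth)
  then have "i \<noteq> j" using assms(5) by auto
  then have "Dt ls = 0" using Dt_dup_row[OF ij(1,2)] ij assms(6) by simp
  ultimately show ?thesis unfolding Fd_def by simp
qed

lemma Fd_dup_white:
  assumes "l1 \<in> set ls" "l2 \<in> set ls" "viable m l1" "viable m l2" "l1 \<noteq> l2" "wht l1 = wht l2"
  shows "Fd ls = 0"
proof -
  have "Pr ls = 0" using P_dup_white[OF assms(1-5)] assms(6) unfolding wht_def by simp
  moreover obtain i j where ij: "i < length ls" "j < length ls" "ls!i = l1" "ls!j = l2"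
    using assms(1,2) by (metis in_set_conv_nth)
  then have "i \<noteq> j" using assms(5) by auto
  then have "Dt ls = 0" using Dt_dup_col[OF ij(1,2)] ij assms(6) by simp
  ultimately show ?thesis unfolding Fd_def by simp
qed

lemma Fd_perm:
  assumes "l \<in> set ls"
  shows "Fd ls = Fd (l # remove1 l ls)"
proof -
  have ms: "mset (l # remove1 l ls) = mset ls" using assms by simp
  then have "set (l # remove1 l ls) = set ls" by (metis set_mset_mset)
  then have "Pr ls = Pr (l # remove1 l ls)" unfolding Pr_def Ev_def by simp
  moreover obtain p where p: "p permutes {..<length ls}" "permute_list p ls = l # remove1 l ls"
    using mset_eq_permutation[OF ms] by blast
  then have "Dt ls = Dt (l # remove1 l ls)" using Dt_perm[OF p(1)] by simp
  ultimately show ?thesis unfolding Fd_def by simp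
qed

lemma Fd_B:
  assumes n: "n \<ge> 1" and x: "x \<ge> L" and nb: "(x,n) \<notin> blk ` set r"
    and rb: "\<forall>l\<in>set r. fst (blk l) \<ge> L \<and> snd (blk l) \<ge> 1"
  shows "Fd ((x,n,x,n)#r) + Fd ((x,n,x-1+delta m n,Suc n)#r) + Fd ((x,n,x+delta m n,Suc n)#r) = Fd r"
  using P_B[of x n r] Dt_B[OF assms] unfolding Fd_def by linarith

lemma Fd_W:
  fixes y :: int
  assumes n: "n \<ge> 1" and y: "y \<ge> L" and nw: "(y + delta m n, Suc n) \<notin> wht ` set r"
    and rw: "\<forall>l\<in>set r. fst (wht l) \<ge> L \<and> snd (wht l) \<ge> 1"
  shows "Fd ((y + delta m n, Suc n, y + delta m n, Suc n)#r) + Fd ((y+1, n, y + delta m n, Suc n)#r)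
       + Fd ((y, n, y + delta m n, Suc n)#r) = Fd r"
  using P_W[OF n, of y r] Dt_W[OF assms] unfolding Fd_def by linarith

lemma Sdom_cons:
  assumes "Sdom r" "l \<notin> set r" "viable m l" "fst (blk l) > L" "fst (wht l) > L"
  shows "Sdom (l # r)"
  using assms unfolding Sdom_def by auto

lemma nI_cons: "nI (l # r) = (if wht l \<noteq> blk l then Suc (nI r) else nI r)"
  unfolding nI_def by simp

lemma III_zero:
  assumes IH: "\<And>ls'. Sdom ls' \<Longrightarrow> nI ls' \<le> nI r \<Longrightarrow> Fd ls' = 0"
    and Sr: "Sdom r" and n: "n \<ge> 1" and x0: "x0 > L" and nb0: "(x0,n) \<notin> blk ` set r"
  shows "Fd ((x0,n,x0+delta m n,Suc n) # r) = 0"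
proof -
  define G where "G x = Fd ((x,n,x+delta m n,Suc n) # r)" for x
  have d0: "delta m n \<ge> 0" using delta_nonneg[OF n] .
  have rv: "\<And>l. l \<in> set r \<Longrightarrow> viable m l \<and> fst (blk l) > L \<and> fst (wht l) > L
       \<and> snd (blk l) \<ge> 1 \<and> snd (wht l) \<ge> 1"
    using Sr viable_lev unfolding Sdom_def by blast
  have rb: "\<forall>l\<in>set r. fst (blk l) \<ge> L \<and> snd (blk l) \<ge> 1" using rv by force
  have rw: "\<forall>l\<in>set r. fst (wht l) \<ge> L \<and> snd (wht l) \<ge> 1" using rv by force
  have Fr: "Fd r = 0" using IH[OF Sr] by simp
  have vI: "viable m (x,n,x,n)" for x using n unfolding viable_def by simp
  have vII: "viable m (x,n,x-1+delta m n,Suc n)" for x using n unfolding viable_def by simp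
  have vIII: "viable m (x,n,x+delta m n,Suc n)" for x using n unfolding viable_def by simp
  have vIw: "viable m (x,Suc n,x,Suc n)" for x unfolding viable_def by simp
  have step: "G x = 0 \<or> ((x+1,n) \<notin> blk ` set r \<and> G x = G (x+1))"
    if x: "x > L" and nb: "(x,n) \<notin> blk ` set r" for x
  proof (cases "(x + delta m n, Suc n) \<in> wht ` set r")
    case True
    then obtain l2 where l2: "l2 \<in> set r" "wht l2 = (x + delta m n, Suc n)" by auto
    have ne2: "(x,n,x+delta m n,Suc n) \<noteq> l2" using nb l2 by (metis blk_simp image_eqI)
    have "G x = 0" unfolding G_def
      by (rule Fd_dup_white[of "(x,n,x+delta m n,Suc n)" _ l2]) (use l2 rv vIII ne2 in auto)
    then show ?thesis by simp
  next
    case False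
    have W: "Fd ((x + delta m n, Suc n, x + delta m n, Suc n)#r) + Fd ((x+1, n, x + delta m n, Suc n)#r)
       + G x = Fd r" unfolding G_def using Fd_W[OF n _ False rw] x by simp
    have nIw: "(x + delta m n, Suc n, x + delta m n, Suc n) \<notin> set r"
      using False by (metis wht_simp image_eqI)
    have xd: "L < x + delta m n" using x d0 by linarith
    have "Fd ((x + delta m n, Suc n, x + delta m n, Suc n)#r) = 0"
      by (rule IH) (auto intro!: Sdom_cons[OF Sr nIw vIw] simp: nI_cons xd)
    then have W': "Fd ((x+1, n, x + delta m n, Suc n)#r) + G x = 0" using W Fr by simp
    show ?thesis
    proof (cases "(x+1,n) \<in> blk ` set r")
      case True
      then obtain l2 where l2: "l2 \<in> set r" "blk l2 = (x+1,n)" by auto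
      have ne2: "(x+1, n, x + delta m n, Suc n) \<noteq> l2" using False l2 by (metis wht_simp image_eqI)
      have v2: "viable m (x+1, n, x + delta m n, Suc n)" using vII[of "x+1"] by simp
      have "Fd ((x+1, n, x + delta m n, Suc n)#r) = 0"
        by (rule Fd_dup_black[of "(x+1, n, x + delta m n, Suc n)" _ l2]) (use l2 rv ne2 v2 in auto)
      then show ?thesis using W' by simp
    next
      case nb1: False
      have B: "Fd ((x+1,n,x+1,n)#r) + Fd ((x+1,n,x+1-1+delta m n,Suc n)#r) + G (x+1) = Fd r"
        unfolding G_def by (rule Fd_B[OF n _ nb1 rb]) (use x in simp)
      have nI1: "(x+1,n,x+1,n) \<notin> set r" using nb1 by (metis blk_simp image_eqI)
      have "Fd ((x+1,n,x+1,n)#r) = 0"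
        by (rule IH) (auto intro!: Sdom_cons[OF Sr nI1 vI] simp: nI_cons x less_imp_le)
      then have "Fd ((x+1, n, x + delta m n, Suc n)#r) + G (x+1) = 0" using B Fr by simp
      then show ?thesis using W' nb1 by simp
    qed
  qed
  show ?thesis
  proof (rule ccontr)
    assume ne: "Fd ((x0,n,x0+delta m n,Suc n) # r) \<noteq> 0"
    have const: "(x0 + int j, n) \<notin> blk ` set r \<and> G (x0 + int j) = G x0" for j
    proof (induction j)
      case 0 then show ?case using nb0 by simp
    next
      case (Suc j)
      have "x0 + int j > L" using x0 by simp
      from step[OF this] Suc.IH ne have "(x0 + int j + 1, n) \<notin> blk ` set r \<and> G (x0 + int j) = G (x0 + int j + 1)"
        unfolding G_def by auto
      moreover have "x0 + int (Suc j) = x0 + int j + 1" by simp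
      ultimately show ?case using Suc.IH by metis
    qed
    have rb': "\<forall>l\<in>set r. fst (blk l) > L \<and> snd (blk l) \<ge> 1" using rv by force
    have rw': "\<forall>l\<in>set r. fst (wht l) > L \<and> snd (wht l) \<ge> 1" using rv by force
    have "(\<lambda>j::nat. G (x0 + int j)) \<longlonglongrightarrow> Fd r"
      unfolding G_def Fd_def by (intro tendsto_diff P_lim[OF n] Dt_lim[OF n rb' rw'])
    moreover have "(\<lambda>j::nat. G (x0 + int j)) = (\<lambda>j. G x0)" using const by auto
    ultimately have "G x0 = Fd r" using LIMSEQ_unique tendsto_const by metis
    then show False using Fr ne unfolding G_def by simp
  qed
qed

end


context loz begin

lemma Xfrak_iff: "p \<in> Xfrak \<longleftrightarrow> snd p \<ge> 1"
  by (cases p) (simp add: Xfrak_def)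

lemma base:
  assumes S: "Sdom ls" and z: "nI ls = 0"
  shows "Fd ls = 0"
proof -
  have "filter (\<lambda>l. wht l \<noteq> blk l) ls = []" using z unfolding nI_def by simp
  then have wb': "\<forall>l\<in>set ls. wht l = blk l" by (simp add: filter_empty_conv)
  then have wb: "\<And>l. l \<in> set ls \<Longrightarrow> wht l = blk l" by blast
  have lv: "\<And>l. l \<in> set ls \<Longrightarrow> viable m l" using S unfolding Sdom_def by auto
  have eqI: "l = (fst (blk l), snd (blk l), fst (blk l), snd (blk l))" if "l \<in> set ls" for l
  proof -
    obtain a b c d where l: "l = (a,b,c,d)" by (cases l) auto
    show ?thesis using wb[OF that] unfolding l by simp
  qed
  define ps where "ps = map blk ls"
  have len: "length ps = length ls" unfolding ps_def by simp
  have inj: "inj_on blk (set ls)"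
  proof (rule inj_onI)
    fix l1 l2 assume "l1 \<in> set ls" "l2 \<in> set ls" "blk l1 = blk l2"
    then show "l1 = l2" using eqI[of l1] eqI[of l2] by simp
  qed
  have dps: "distinct ps" unfolding ps_def using S inj by (simp add: Sdom_def distinct_map)
  have Xf: "set ps \<subseteq> Xfrak"
  proof
    fix p assume "p \<in> set ps"
    then obtain l where "l \<in> set ls" "p = blk l" unfolding ps_def by auto
    then show "p \<in> Xfrak" using lv viable_lev Xfrak_iff by blast
  qed
  have Eq: "Ev ls = {\<omega> \<in> space M. \<forall>p\<in>set ps. p \<in> X \<omega>}"
  proof -
    have "lozenge_present m (X \<omega>) l = (blk l \<in> X \<omega>)" if "l \<in> set ls" for l \<omega>
    proof -
      have "lozenge_present m (X \<omega>) l = lozenge_present m (X \<omega>) (fst (blk l), snd (blk l), fst (blk l), snd (blk l))"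
        using eqI[OF that] by simp
      also have "\<dots> = (blk l \<in> X \<omega>)" using lp_I[of m "X \<omega>" "fst (blk l)" "snd (blk l)"] by simp
      finally show ?thesis .
    qed
    then show ?thesis unfolding Ev_def ps_def by auto
  qed
  have P: "Pr ls = det (mat (length ps) (length ps)
               (\<lambda>(i, j). K (fst (ps ! i)) (snd (ps ! i)) (fst (ps ! j)) (snd (ps ! j)) t))"
    unfolding Pr_def Eq by (rule determinantal[OF dps Xf])
  have Mq: "Mx ls = mat (length ps) (length ps) (\<lambda>(i,j). C (ps!i) / C (ps!j) *
      K (fst (ps ! i)) (snd (ps ! i)) (fst (ps ! j)) (snd (ps ! j)) t)"
  proof (rule eq_matI)
    fix i j assume ij: "i < dim_row (mat (length ps) (length ps) (\<lambda>(i,j). C (ps!i) / C (ps!j) *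
      K (fst (ps ! i)) (snd (ps ! i)) (fst (ps ! j)) (snd (ps ! j)) t))"
      "j < dim_col (mat (length ps) (length ps) (\<lambda>(i,j). C (ps!i) / C (ps!j) *
      K (fst (ps ! i)) (snd (ps ! i)) (fst (ps ! j)) (snd (ps ! j)) t))"
    then have i: "i < length ls" and j: "j < length ls" using len by auto
    have w: "wht (ls!j) = blk (ls!j)" using wb[OF nth_mem[OF j]] .
    have pi: "ps!i = blk (ls!i)" and pj: "ps!j = blk (ls!j)" using i j unfolding ps_def by simp_all
    show "Mx ls $$ (i,j) = mat (length ps) (length ps) (\<lambda>(i,j). C (ps!i) / C (ps!j) *
      K (fst (ps ! i)) (snd (ps ! i)) (fst (ps ! j)) (snd (ps ! j)) t) $$ (i,j)"
      using i j len by (simp add: Mx_idx kt_def Ktilde_def w pi pj)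
  qed (simp_all add: len)
  have cnz: "\<And>i. i < length ps \<Longrightarrow> C (ps!i) \<noteq> 0" using C_nz Xf nth_mem by blast
  have "Dt ls = det (mat (length ps) (length ps)
               (\<lambda>(i, j). K (fst (ps ! i)) (snd (ps ! i)) (fst (ps ! j)) (snd (ps ! j)) t))"
    unfolding Dt_def Mq
    using det_sim[of "length ps" "\<lambda>i. C (ps!i)" "\<lambda>i j. K (fst (ps ! i)) (snd (ps ! i)) (fst (ps ! j)) (snd (ps ! j)) t", OF cnz]
    by simp
  then show ?thesis using P unfolding Fd_def by simp
qed

lemma nI_mset: "mset xs = mset ys \<Longrightarrow> nI xs = nI ys"
  unfolding nI_def by (metis mset_filter size_mset)

lemma main: "Sdom ls \<Longrightarrow> Fd ls = 0"
proof (induction "nI ls" arbitrary: ls rule: less_induct)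
  case less
  show ?case
  proof (cases "nI ls = 0")
    case True
    then show ?thesis using base less.prems by simp
  next
    case False
    then obtain l where l: "l \<in> set ls" "wht l \<noteq> blk l" unfolding nI_def
      by (metis (mono_tags, lifting) filter_empty_conv length_0_conv)
    define r where "r = remove1 l ls"
    have F: "Fd ls = Fd (l # r)" unfolding r_def by (rule Fd_perm[OF l(1)])
    have ms: "mset (l # r) = mset ls" unfolding r_def using l(1) by simp
    have nIs: "nI ls = Suc (nI r)" using nI_mset[OF ms] l(2) by (simp add: nI_cons)
    have dls: "distinct ls" using less.prems unfolding Sdom_def by simp
    have setr: "set r = set ls - {l}" unfolding r_def using dls by simp
    have Sr: "Sdom r" using less.prems dls unfolding Sdom_def r_def by auto
    have lr: "l \<notin> set r" using setr by simp
    have IHr: "\<And>ls'. Sdom ls' \<Longrightarrow> nI ls' \<le> nI r \<Longrightarrow> Fd ls' = 0"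
      using less.hyps nIs by (metis le_imp_less_Suc)
    have lv: "viable m l" "fst (blk l) > L" "fst (wht l) > L" using less.prems l(1) unfolding Sdom_def by auto
    obtain x n x' n' where l4: "l = (x,n,x',n')" by (cases l) auto
    have n: "n \<ge> 1" and x: "x > L" using lv l4 viable_lev by fastforce+
    have types: "(x',n') = (x-1+delta m n, Suc n) \<or> (x',n') = (x+delta m n, Suc n)"
      using viable_cases[of m x n x' n'] lv l(2) l4 by auto
    have rv: "\<And>l. l \<in> set r \<Longrightarrow> viable m l \<and> fst (blk l) > L \<and> fst (wht l) > L
       \<and> snd (blk l) \<ge> 1 \<and> snd (wht l) \<ge> 1"
      using Sr viable_lev unfolding Sdom_def by blast
    have rb: "\<forall>l\<in>set r. fst (blk l) \<ge> L \<and> snd (blk l) \<ge> 1" using rv by force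
    show ?thesis
    proof (cases "(x,n) \<in> blk ` set r")
      case True
      then obtain l2 where l2: "l2 \<in> set r" "blk l2 = (x,n)" by auto
      have "l \<noteq> l2" using lr l2 by auto
      then have "Fd (l # r) = 0"
        by (intro Fd_dup_black[of l _ l2]) (use l2 rv lv l4 in auto)
      then show ?thesis using F by simp
    next
      case nb: False
      have III: "Fd ((x,n,x+delta m n,Suc n) # r) = 0" by (rule III_zero[OF IHr Sr n x nb])
      show ?thesis
      proof (cases "(x',n') = (x+delta m n, Suc n)")
        case True
        then show ?thesis using F III l4 by simp
      next
        case False
        then have II: "l = (x,n,x-1+delta m n,Suc n)" using types l4 by auto
        have B: "Fd ((x,n,x,n)#r) + Fd ((x,n,x-1+delta m n,Suc n)#r) + Fd ((x,n,x+delta m n,Suc n)#r) = Fd r"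
          by (rule Fd_B[OF n _ nb rb]) (use x in simp)
        have nI1: "(x,n,x,n) \<notin> set r" using nb by (metis blk_simp image_eqI)
        have vI: "viable m (x,n,x,n)" using n unfolding viable_def by simp
        have "Fd ((x,n,x,n)#r) = 0"
          by (rule IHr) (auto intro!: Sdom_cons[OF Sr nI1 vI] simp: nI_cons x)
        moreover have "Fd r = 0" using IHr[OF Sr] by simp
        ultimately show ?thesis using B III F II by simp
      qed
    qed
  qed
qed

end

theorem proposition2p5:
  fixes M :: "'a measure"
    and X :: "real \<Rightarrow> 'a \<Rightarrow> (int \<times> nat) set"
    and m :: "nat \<Rightarrow> nat"
    and K :: "int \<Rightarrow> nat \<Rightarrow> int \<Rightarrow> nat \<Rightarrow> real \<Rightarrow> real"
    and C :: "int \<times> nat \<Rightarrow> real"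
    and L :: int
  assumes prob: "prob_space M"
    and in_Xfrak: "\<And>t \<omega>. t \<ge> 0 \<Longrightarrow> \<omega> \<in> space M \<Longrightarrow> X t \<omega> \<subseteq> Xfrak"
    and meas: "\<And>t p. t \<ge> 0 \<Longrightarrow> {\<omega> \<in> space M. p \<in> X t \<omega>} \<in> sets M"
    and m_mono: "\<And>n. n \<ge> 1 \<Longrightarrow> m n \<le> m (Suc n) \<and> m (Suc n) \<le> m n + 1"
    and counts: "\<And>t. t \<ge> 0 \<Longrightarrow> AE \<omega> in M. \<forall>n\<ge>1. finite (level (X t \<omega>) n) \<and> card (level (X t \<omega>) n) = m n"
    and interl: "\<And>t. t \<ge> 0 \<Longrightarrow> AE \<omega> in M. interlacing m (X t \<omega>)"
    and determinantal: "\<And>t ps. t \<ge> 0 \<Longrightarrow> distinct ps \<Longrightarrow> set ps \<subseteq> Xfrak \<Longrightarrow>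
        measure M {\<omega> \<in> space M. \<forall>p\<in>set ps. p \<in> X t \<omega>} =
        det (mat (length ps) (length ps)
               (\<lambda>(i, j). K (fst (ps ! i)) (snd (ps ! i)) (fst (ps ! j)) (snd (ps ! j)) t))"
    and C_nz: "\<And>p. p \<in> Xfrak \<Longrightarrow> C p \<noteq> 0"
    and C1: "\<And>t x n x' n'. t \<ge> 0 \<Longrightarrow> n \<ge> 1 \<Longrightarrow> n' \<ge> 1 \<Longrightarrow> x \<ge> L \<Longrightarrow> x' \<ge> L \<Longrightarrow>
        Ktilde C K x n x' n' t + Ktilde C K x n (x' - 1 + delta m n') (Suc n') t
          + Ktilde C K x n (x' + delta m n') (Suc n') t
        = (if (x, n) = (x', n') then 1 else 0)"
    and C2: "\<And>t x n x' n'. t \<ge> 0 \<Longrightarrow> n \<ge> 2 \<Longrightarrow> n' \<ge> 1 \<Longrightarrow> x \<ge> L \<Longrightarrow> x' \<ge> L \<Longrightarrow>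
        Ktilde C K x n x' n' t + Ktilde C K (x + 1 - delta m (n - 1)) (n - 1) x' n' t
          + Ktilde C K (x - delta m (n - 1)) (n - 1) x' n' t
        = (if (x, n) = (x', n') then 1 else 0)"
    and C3: "\<And>t n n' n'' x' x''. t \<ge> 0 \<Longrightarrow> n \<ge> 1 \<Longrightarrow> n' \<ge> 1 \<Longrightarrow> n'' \<ge> 1 \<Longrightarrow>
        x' > L \<Longrightarrow> x'' > L \<Longrightarrow>
        ((\<lambda>x. Ktilde C K x n x' n' t * Ktilde C K x'' n'' (x - 1 + delta m n) (Suc n) t)
           \<longlongrightarrow> 0) at_top"
    and C4: "\<And>t n n' n'' x' x''. t \<ge> 0 \<Longrightarrow> n \<ge> 1 \<Longrightarrow> n' \<ge> 1 \<Longrightarrow> n'' \<ge> 1 \<Longrightarrow>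
        x' > L \<Longrightarrow> x'' > L \<Longrightarrow>
        ((\<lambda>x. Ktilde C K x n x' n' t * Ktilde C K x'' n'' (x + delta m n) (Suc n) t)
           \<longlongrightarrow> 0) at_top"
    and C5: "\<And>t n. t \<ge> 0 \<Longrightarrow> n \<ge> 1 \<Longrightarrow>
        ((\<lambda>x. Ktilde C K x n (x - 1 + delta m n) (Suc n) t) \<longlongrightarrow> 0) at_top"
    and C6: "\<And>t n. t \<ge> 0 \<Longrightarrow> n \<ge> 1 \<Longrightarrow>
        ((\<lambda>x. Ktilde C K x n (x + delta m n) (Suc n) t) \<longlongrightarrow> 1) at_top"
  shows "\<forall>t\<ge>0. \<forall>ls :: (int \<times> nat \<times> int \<times> nat) list.
     (\<forall>l\<in>set ls. viable m l) \<and>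
     distinct (map (\<lambda>(x, n, x', n'). (x, n)) ls) \<and>
     distinct (map (\<lambda>(x, n, x', n'). (x', n')) ls) \<and>
     (\<forall>(x, n, x', n')\<in>set ls. x > L \<and> x' > L) \<longrightarrow>
     measure M {\<omega> \<in> space M. \<forall>l\<in>set ls. lozenge_present m (X t \<omega>) l} =
     det (mat (length ls) (length ls)
       (\<lambda>(i, j). case ls ! i of (x, n, _, _) \<Rightarrow> case ls ! j of (_, _, x', n') \<Rightarrow>
           Ktilde C K x n x' n' t))"
proof (intro allI impI)
  fix t :: real and ls :: "(int \<times> nat \<times> int \<times> nat) list"
  assume t: "t \<ge> 0"
  assume H: "(\<forall>l\<in>set ls. viable m l) \<and>
     distinct (map (\<lambda>(x, n, x', n'). (x, n)) ls) \<and>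
     distinct (map (\<lambda>(x, n, x', n'). (x', n')) ls) \<and>
     (\<forall>(x, n, x', n')\<in>set ls. x > L \<and> x' > L)"
  interpret Lz: loz M "X t" m K C L t
    by (rule loz.intro; (rule prob meas[OF t] m_mono counts[OF t] interl[OF t] determinantal[OF t]
        C_nz C1[OF t] C2[OF t] C4[OF t] C6[OF t]; assumption?))
  have d: "distinct ls" using H by (simp add: distinct_map)
  have e: "viable m l \<and> fst (blk l) > L \<and> fst (wht l) > L" if l: "l \<in> set ls" for l
  proof -
    obtain x n x' n' where l4: "l = (x,n,x',n')" by (cases l) auto
    show ?thesis using H l l4 by fastforce
  qed
  have S: "Lz.Sdom ls" unfolding Lz.Sdom_def using d e by blast
  have F0: "Lz.Fd ls = 0" by (rule Lz.main[OF S])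
  have Meq: "mat (length ls) (length ls)
       (\<lambda>(i, j). case ls ! i of (x, n, _, _) \<Rightarrow> case ls ! j of (_, _, x', n') \<Rightarrow>
           Ktilde C K x n x' n' t) = Lz.Mx ls"
    by (intro eq_matI) (auto simp: Lz.Mx_idx Lz.kt_def blk_def wht_def split: prod.splits)
  show "measure M {\<omega> \<in> space M. \<forall>l\<in>set ls. lozenge_present m (X t \<omega>) l} =
     det (mat (length ls) (length ls)
       (\<lambda>(i, j). case ls ! i of (x, n, _, _) \<Rightarrow> case ls ! j of (_, _, x', n') \<Rightarrow>
           Ktilde C K x n x' n' t))"
    unfolding Meq using F0 unfolding Lz.Fd_def Lz.Pr_def Lz.Ev_def Lz.Dt_def by simp
qed

end
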